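(* Let $\Gamma$ be a finite monoid generating set of $V$. For $z \in \{0,1\}^+$ define $L_z = \{w \in \Gamma^+ : w(z0^\omega) \neq z0^\omega\}$. Then $L_z \subseteq \mathrm{cowp}_\Gamma(V)$, and $L_z^{\mathrm{rev}}$ is a deterministic context-free language over the alphabet $\Gamma$.
   Context: Thompson group $V$: a prefix code is a set $P \subseteq \{0,1\}^*$ in which no element is a proper prefix of another; it is maximal if it is contained in no larger prefix code. Each bijection $\varphi: P\to Q$ between finite maximal prefix codes defines a homeomorphism of the Cantor space $\{0,1\}^\omega$ by $pt \mapsto \varphi(p)t$ ($p\in P$, $t \in\{0,1\}^\omega$); $V$ is the group of all such homeomorphisms under composition. A monoid generating set $\Gamma \subseteq V$ is a set such that every element of $V$ is a product of elements of $\Gamma$; it is regarded as a finite alphabet. For $w = a_n \cdots a_1\in\Gamma^+$, $w(\cdot)$ denotes the homeomorphism $a_n\circ\cdots\circ a_1$ ($a_1$ applied first). $\mathrm{cowp}_\Gamma(V) = \{w\in\Gamma^* : w \text{ does not evaluate to the identity of } V\}$. $0^\omega$ is the all-zero sequence. $L^{\mathrm{rev}} = \{w^{\mathrm{rev}}: w\in L\}$ with $(a_1\cdots a_n)^{\mathrm{rev}} = a_n\cdots a_1$. *)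

theory Defs
  imports Main "HOL-Library.Sublist"
begin

type_synonym cantor = "nat \<Rightarrow> bool"

definition conc :: "bool list \<Rightarrow> cantor \<Rightarrow> cantor" where
  "conc p t = (\<lambda>n. if n < length p then p ! n else t (n - length p))"

definition zeros :: cantor where
  "zeros = (\<lambda>_. False)"

definition prefix_code :: "bool list set \<Rightarrow> bool" where
  "prefix_code P \<longleftrightarrow> (\<forall>p\<in>P. \<forall>q\<in>P. prefix p q \<longrightarrow> p = q)"

definition maximal_prefix_code :: "bool list set \<Rightarrow> bool" where
  "maximal_prefix_code P \<longleftrightarrow> prefix_code P \<and>
     (\<forall>P'. prefix_code P' \<and> P \<subseteq> P' \<longrightarrow> P' = P)"

definition thompson_V :: "(cantor \<Rightarrow> cantor) set" where
  "thompson_V = {f. \<exists>P Q \<phi>. finite P \<and> finite Q \<and> maximal_prefix_code P \<and>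
      maximal_prefix_code Q \<and> bij_betw \<phi> P Q \<and>
      (\<forall>p\<in>P. \<forall>t. f (conc p t) = conc (\<phi> p) t)}"

text \<open>Evaluation of a word: the list [a_n, ..., a_1] evaluates to a_n o ... o a_1
  (a_1, the last list element, is applied first).\<close>
definition eval_word :: "(cantor \<Rightarrow> cantor) list \<Rightarrow> cantor \<Rightarrow> cantor" where
  "eval_word w = foldr (\<circ>) w id"

definition monoid_generating_set :: "(cantor \<Rightarrow> cantor) set \<Rightarrow> bool" where
  "monoid_generating_set \<Gamma> \<longleftrightarrow> \<Gamma> \<subseteq> thompson_V \<and>
     (\<forall>f\<in>thompson_V. \<exists>w\<in>lists \<Gamma>. eval_word w = f)"

definition cowp :: "(cantor \<Rightarrow> cantor) set \<Rightarrow> (cantor \<Rightarrow> cantor) list set" where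
  "cowp \<Gamma> = {w \<in> lists \<Gamma>. eval_word w \<noteq> id}"

record ('s, 'a, 'g) dpda =
  states :: "'s set"
  init :: 's
  finals :: "'s set"
  stack_syms :: "'g set"
  init_stack :: 'g
  delta :: "'s \<Rightarrow> 'a option \<Rightarrow> 'g \<Rightarrow> ('s \<times> 'g list) option"

text \<open>Well-formed DPDA with input alphabet Sigma (None = epsilon move).\<close>
definition dpda_wf :: "'a set \<Rightarrow> ('s, 'a, 'g) dpda \<Rightarrow> bool" where
  "dpda_wf \<Sigma> M \<longleftrightarrow> finite \<Sigma> \<and> finite (states M) \<and> finite (stack_syms M) \<and>
     init M \<in> states M \<and> finals M \<subseteq> states M \<and> init_stack M \<in> stack_syms M \<and>
     (\<forall>q x Z p \<beta>. delta M q x Z = Some (p, \<beta>) \<longrightarrow>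
        q \<in> states M \<and> Z \<in> stack_syms M \<and> p \<in> states M \<and> set \<beta> \<subseteq> stack_syms M \<and>
        (\<forall>a. x = Some a \<longrightarrow> a \<in> \<Sigma>)) \<and>
     (\<forall>q Z a. delta M q None Z \<noteq> None \<longrightarrow> delta M q (Some a) Z = None)"

text \<open>Configurations: (state, remaining input, stack with top first).\<close>
inductive dpda_step :: "('s, 'a, 'g) dpda \<Rightarrow> ('s \<times> 'a list \<times> 'g list) \<Rightarrow>
    ('s \<times> 'a list \<times> 'g list) \<Rightarrow> bool" for M where
  eps: "delta M q None Z = Some (p, \<beta>) \<Longrightarrow> dpda_step M (q, w, Z # \<gamma>) (p, w, \<beta> @ \<gamma>)"
| read: "delta M q (Some a) Z = Some (p, \<beta>) \<Longrightarrow> dpda_step M (q, a # w, Z # \<gamma>) (p, w, \<beta> @ \<gamma>)"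

definition dpda_lang :: "('s, 'a, 'g) dpda \<Rightarrow> 'a list set" where
  "dpda_lang M = {w. \<exists>q \<gamma>. q \<in> finals M \<and>
      (dpda_step M)\<^sup>*\<^sup>* (init M, w, [init_stack M]) (q, [], \<gamma>)}"

text \<open>Deterministic context-free language over alphabet Sigma. States and stack
  symbols are taken from nat (any finite sets can be encoded there).\<close>
definition dcfl :: "'a set \<Rightarrow> 'a list set \<Rightarrow> bool" where
  "dcfl \<Sigma> L \<longleftrightarrow> (\<exists>M :: (nat, 'a, nat) dpda. dpda_wf \<Sigma> M \<and> dpda_lang M = L)"

definition L_z :: "(cantor \<Rightarrow> cantor) set \<Rightarrow> bool list \<Rightarrow> (cantor \<Rightarrow> cantor) list set" where
  "L_z \<Gamma> z = {w \<in> lists \<Gamma>. w \<noteq> [] \<and> eval_word w (conc z zeros) \<noteq> conc z zeros}"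

end

theory Submission
  imports Defs "HOL-Library.Countable"
begin


lemma conc_Nil[simp]: "conc [] t = t"
  by (simp add: conc_def)

lemma conc_append: "conc (a @ b) t = conc a (conc b t)"
  by (auto simp: conc_def fun_eq_iff nth_append)

lemma conc_single: "conc [b] t = (\<lambda>n. if n = 0 then b else t (n - 1))"
  by (auto simp: conc_def fun_eq_iff)

lemma conc_single_eq: "conc [b] t = conc [c] s \<longleftrightarrow> b = c \<and> t = s"
proof
  assume h: "conc [b] t = conc [c] s"
  have "b = c" using fun_cong[OF h, of 0] by (simp add: conc_single)
  moreover have "t = s"
  proof
    fix n show "t n = s n" using fun_cong[OF h, of "Suc n"] by (simp add: conc_single)
  qed
  ultimately show "b = c \<and> t = s" by simp
qed simp

lemma zeros_False: "conc [False] zeros = zeros"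
  by (auto simp: conc_single zeros_def)

lemma conc_nth: "k < length a \<Longrightarrow> conc a s k = a ! k"
  by (simp add: conc_def)

lemma conc_eq_prefix:
  assumes "conc a s = conc c t" shows "prefix a c \<or> prefix c a"
proof -
  have eq: "\<And>k. k < length a \<Longrightarrow> k < length c \<Longrightarrow> a ! k = c ! k"
    using assms by (metis conc_nth)
  show ?thesis
  proof (cases "length a \<le> length c")
    case True
    have "a = take (length a) c" by (rule nth_equalityI) (use True eq in auto)
    then show ?thesis by (metis take_is_prefix)
  next
    case False
    have "c = take (length c) a" by (rule nth_equalityI) (use False eq in auto)
    then show ?thesis by (metis take_is_prefix)
  qed
qed

lemma ex_prefix:
  assumes "finite P" "maximal_prefix_code P"
  shows "\<exists>p\<in>P. \<exists>t. x = conc p t"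
proof (rule ccontr)
  assume no: "\<not> ?thesis"
  define K where "K = Suc (\<Sum>p\<in>P. length p)"
  define q where "q = map x [0..<K]"
  have lenP: "\<And>p. p \<in> P \<Longrightarrow> length p < K"
    using assms(1) unfolding K_def by (simp add: le_imp_less_Suc member_le_sum)
  have A: "\<not> prefix p q" if "p \<in> P" for p
  proof
    assume "prefix p q"
    then obtain ys where q: "q = p @ ys" by (auto simp: prefix_def)
    have "x = conc p (\<lambda>n. x (n + length p))"
    proof
      fix k show "x k = conc p (\<lambda>n. x (n + length p)) k"
      proof (cases "k < length p")
        case True
        have "p ! k = q ! k" using q True by (simp add: nth_append)
        also have "\<dots> = x k" using True lenP[OF that] by (simp add: q_def)
        finally show ?thesis using True by (simp add: conc_def)
      qed (simp add: conc_def)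
    qed
    with no that show False by blast
  qed
  have B: "\<not> prefix q p" if "p \<in> P" for p
    using lenP[OF that] prefix_length_le by (fastforce simp: q_def)
  have "prefix_code (insert q P)"
    using assms(2) A B unfolding maximal_prefix_code_def prefix_code_def by auto
  hence "insert q P = P" using assms(2) unfolding maximal_prefix_code_def by blast
  hence "q \<in> P" by blast
  with A show False by blast
qed

lemma pref_extend:
  assumes "finite P" "maximal_prefix_code P" "p0 \<in> P" "prefix r p0" "r \<notin> P"
  shows "\<exists>p\<in>P. prefix (r @ [b]) p"
proof -
  obtain p t where p: "p \<in> P" "conc (r @ [b]) zeros = conc p t"
    using ex_prefix[OF assms(1,2)] by blast
  have pc: "prefix_code P" using assms(2) by (simp add: maximal_prefix_code_def)
  from conc_eq_prefix[OF p(2)] show ?thesis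
  proof
    assume "prefix (r @ [b]) p" with p show ?thesis by blast
  next
    assume "prefix p (r @ [b])"
    hence "p = r @ [b] \<or> prefix p r" by simp
    thus ?thesis
    proof
      assume "p = r @ [b]" with p show ?thesis by blast
    next
      assume pr: "prefix p r"
      hence "prefix p p0" using assms(4) by (metis prefix_order.trans)
      hence "p = p0" using pc p(1) assms(3) by (simp add: prefix_code_def)
      hence "r = p" using pr assms(4) by (simp add: prefix_order.antisym)
      with p assms(5) show ?thesis by simp
    qed
  qed
qed



datatype st = Init | Ready bool | Proc nat "bool list"
datatype sym = Bot | Cell bool "bool list"

instance st :: countable by countable_datatype
instance sym :: countable by countable_datatype

definition infoT :: "bool list \<Rightarrow> cantor \<Rightarrow> bool list" where
  "infoT z t = map (\<lambda>j. t = conc (drop j z) zeros) [0..<Suc (length z)]"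

definition nxt :: "bool list \<Rightarrow> bool \<Rightarrow> bool list \<Rightarrow> bool list" where
  "nxt z b I = map (\<lambda>j. if j < length z then z ! j = b \<and> I ! Suc j else \<not> b \<and> I ! length z)
      [0..<Suc (length z)]"

fun annot :: "bool list \<Rightarrow> bool list \<Rightarrow> sym list" where
  "annot z [] = []"
| "annot z (b # u) = Cell b (infoT z (conc (b # u) zeros)) # annot z u"

fun annotI :: "bool list \<Rightarrow> bool list \<Rightarrow> bool list \<Rightarrow> sym list" where
  "annotI z [] I = []"
| "annotI z (b # v) I = Cell b (foldr (nxt z) (b # v) I) # annotI z v I"

fun topinfo :: "bool list \<Rightarrow> sym \<Rightarrow> bool list" where
  "topinfo z Bot = infoT z zeros"
| "topinfo z (Cell b I) = I"

lemma length_infoT[simp]: "length (infoT z t) = Suc (length z)"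
  by (simp add: infoT_def)

lemma length_nxt[simp]: "length (nxt z b I) = Suc (length z)"
  by (simp add: nxt_def)

lemma conc_Cons: "conc (b # v) t = conc [b] (conc v t)"
  using conc_append[of "[b]" v t] by simp

lemma nxt_infoT: "nxt z b (infoT z t) = infoT z (conc [b] t)"
  unfolding nxt_def infoT_def
proof (rule map_cong[OF refl])
  fix j assume "j \<in> set [0..<Suc (length z)]"
  hence j: "j \<le> length z" by auto
  show "(if j < length z then z ! j = b \<and> map (\<lambda>j. t = conc (drop j z) zeros) [0..<Suc (length z)] ! Suc j
        else \<not> b \<and> map (\<lambda>j. t = conc (drop j z) zeros) [0..<Suc (length z)] ! length z) =
        (conc [b] t = conc (drop j z) zeros)"
  proof (cases "j < length z")
    case True
    have "drop j z = z ! j # drop (Suc j) z" using True by (simp add: Cons_nth_drop_Suc)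
    hence H: "conc (drop j z) zeros = conc [z ! j] (conc (drop (Suc j) z) zeros)"
      using conc_append[of "[z ! j]" "drop (Suc j) z" zeros] by simp
    have m: "map (\<lambda>j. t = conc (drop j z) zeros) [0..<Suc (length z)] ! Suc j
        = (t = conc (drop (Suc j) z) zeros)"
      using True by (subst nth_map) (simp_all del: upt_Suc)
    show ?thesis unfolding m H conc_single_eq using True by auto
  next
    case False
    hence jz: "j = length z" using j by simp
    have m: "map (\<lambda>j. t = conc (drop j z) zeros) [0..<Suc (length z)] ! length z = (t = zeros)"
      by (subst nth_map) (simp_all del: upt_Suc)
    have D: "conc (drop j z) zeros = conc [False] zeros" using jz by (simp add: zeros_False)
    have E: "(conc [b] t = conc (drop j z) zeros) = (\<not> b \<and> t = zeros)"
      unfolding D conc_single_eq by simp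
    show ?thesis unfolding m E using False by simp
  qed
qed

lemma foldr_nxt: "foldr (nxt z) v (infoT z t) = infoT z (conc v t)"
  by (induction v) (simp_all add: nxt_infoT flip: conc_Cons)

lemma annotI_annot: "annotI z v (infoT z (conc u zeros)) @ annot z u = annot z (v @ u)"
proof (induction v)
  case (Cons a v)
  have e: "conc (a # v @ u) zeros = conc [a] (conc v (conc u zeros))" by (metis conc_Cons conc_append)
  show ?case using Cons by (simp add: foldr_nxt nxt_infoT e)
qed simp

lemma topinfo_hd: "topinfo z (hd (annot z u @ [Bot])) = infoT z (conc u zeros)"
  by (cases u) auto

lemma infoT_0: "infoT z t ! 0 = (t = conc z zeros)"
  by (simp add: infoT_def nth_map_upt del: upt_Suc)

lemma dpda_to_nat:
  fixes M :: "('s::countable, 'a, 'g::countable) dpda"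
  assumes wf: "dpda_wf \<Sigma> M"
  shows "dcfl \<Sigma> (dpda_lang M)"
proof -
  define dl where "dl = (\<lambda>q x Z. if q \<in> range (to_nat :: 's \<Rightarrow> nat) \<and> Z \<in> range (to_nat :: 'g \<Rightarrow> nat) then
      map_option (\<lambda>(p, \<beta>). (to_nat p, map to_nat \<beta>)) (delta M (from_nat q) x (from_nat Z)) else None)"
  define M' :: "(nat, 'a, nat) dpda" where "M' = \<lparr>states = to_nat ` states M, init = to_nat (init M),
      finals = to_nat ` finals M, stack_syms = to_nat ` stack_syms M, init_stack = to_nat (init_stack M),
      delta = dl\<rparr>"
  have dl_enc: "dl (to_nat q) x (to_nat Z) = map_option (\<lambda>(p, \<beta>). (to_nat p, map to_nat \<beta>)) (delta M q x Z)"
    for q x Z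
  proof -
    have "to_nat q \<in> range (to_nat :: 's \<Rightarrow> nat)" "to_nat Z \<in> range (to_nat :: 'g \<Rightarrow> nat)" by auto
    thus ?thesis by (simp add: dl_def)
  qed
  have dl_Some: "dl q x Z = Some (p, \<beta>) \<Longrightarrow> \<exists>q0 Z0 p0 \<beta>0. q = to_nat q0 \<and> Z = to_nat Z0 \<and>
      p = to_nat p0 \<and> \<beta> = map to_nat \<beta>0 \<and> delta M q0 x Z0 = Some (p0, \<beta>0)" for q x Z p \<beta>
    by (auto simp: dl_def split: if_splits)
  have wfM: "finite \<Sigma>" "finite (states M)" "finite (stack_syms M)" "init M \<in> states M"
    "finals M \<subseteq> states M" "init_stack M \<in> stack_syms M"
    and wfd: "\<And>q x Z p \<beta>. delta M q x Z = Some (p, \<beta>) \<Longrightarrow>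
        q \<in> states M \<and> Z \<in> stack_syms M \<and> p \<in> states M \<and> set \<beta> \<subseteq> stack_syms M \<and>
        (\<forall>a. x = Some a \<longrightarrow> a \<in> \<Sigma>)"
    and wfe: "\<And>q Z a. delta M q None Z \<noteq> None \<Longrightarrow> delta M q (Some a) Z = None"
    using wf unfolding dpda_wf_def by blast+
  have D1: "dl q x Z = Some (p, \<beta>) \<Longrightarrow>
        q \<in> to_nat ` states M \<and> Z \<in> to_nat ` stack_syms M \<and> p \<in> to_nat ` states M \<and>
        set \<beta> \<subseteq> to_nat ` stack_syms M \<and> (\<forall>a. x = Some a \<longrightarrow> a \<in> \<Sigma>)" for q x Z p \<beta>
  proof -
    assume "dl q x Z = Some (p, \<beta>)"
    from dl_Some[OF this] obtain q0 Z0 p0 \<beta>0 where h: "q = to_nat q0" "Z = to_nat Z0"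
      "p = to_nat p0" "\<beta> = map to_nat \<beta>0" "delta M q0 x Z0 = Some (p0, \<beta>0)" by blast
    from wfd[OF h(5)] h(1-4) show ?thesis by auto
  qed
  have D2: "dl q None Z \<noteq> None \<Longrightarrow> dl q (Some a) Z = None" for q Z a
    using wfe[of "from_nat q" "from_nat Z" a] by (auto simp: dl_def split: if_splits)
  have "dpda_wf \<Sigma> M'"
    unfolding dpda_wf_def M'_def dpda.simps
    using wfM D1 D2 by auto

  have stepB: "dpda_step M' (to_nat q, w, map to_nat \<gamma>) d \<Longrightarrow>
      \<exists>q' w' \<gamma>'. d = (to_nat q', w', map to_nat \<gamma>') \<and> dpda_step M (q, w, \<gamma>) (q', w', \<gamma>')" for q w \<gamma> d
  proof (erule dpda_step.cases)
    fix q0 Z p \<beta> w0 \<gamma>0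
    assume h: "(to_nat q, w, map to_nat \<gamma>) = (q0, w0, Z # \<gamma>0)" "d = (p, w0, \<beta> @ \<gamma>0)"
      "delta M' q0 None Z = Some (p, \<beta>)"
    then obtain Y \<gamma>1 where g: "\<gamma> = Y # \<gamma>1" by (cases \<gamma>) auto
    with h have "Z = to_nat Y" "\<gamma>0 = map to_nat \<gamma>1" "q0 = to_nat q" "w0 = w" by auto
    with h(3) obtain p0 \<beta>0 where "delta M q None Y = Some (p0, \<beta>0)" "p = to_nat p0" "\<beta> = map to_nat \<beta>0"
      by (auto simp: M'_def dl_enc)
    thus ?thesis using h g \<open>\<gamma>0 = _\<close> \<open>w0 = w\<close>
      by (intro exI[of _ p0] exI[of _ w] exI[of _ "\<beta>0 @ \<gamma>1"]) (auto intro: dpda_step.eps)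
  next
    fix q0 a Z p \<beta> w0 \<gamma>0
    assume h: "(to_nat q, w, map to_nat \<gamma>) = (q0, a # w0, Z # \<gamma>0)" "d = (p, w0, \<beta> @ \<gamma>0)"
      "delta M' q0 (Some a) Z = Some (p, \<beta>)"
    then obtain Y \<gamma>1 where g: "\<gamma> = Y # \<gamma>1" by (cases \<gamma>) auto
    with h have "Z = to_nat Y" "\<gamma>0 = map to_nat \<gamma>1" "q0 = to_nat q" "w = a # w0" by auto
    with h(3) obtain p0 \<beta>0 where "delta M q (Some a) Y = Some (p0, \<beta>0)" "p = to_nat p0" "\<beta> = map to_nat \<beta>0"
      by (auto simp: M'_def dl_enc)
    thus ?thesis using h g \<open>\<gamma>0 = _\<close> \<open>w = a # w0\<close>
      by (intro exI[of _ p0] exI[of _ w0] exI[of _ "\<beta>0 @ \<gamma>1"]) (auto intro: dpda_step.read)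
  qed
  have stepA: "dpda_step M (q, w, \<gamma>) (q', w', \<gamma>') \<Longrightarrow>
      dpda_step M' (to_nat q, w, map to_nat \<gamma>) (to_nat q', w', map to_nat \<gamma>')" for q w \<gamma> q' w' \<gamma>'
  proof (erule dpda_step.cases)
    fix q0 Z p \<beta> w0 \<gamma>0
    assume h: "(q, w, \<gamma>) = (q0, w0, Z # \<gamma>0)" "(q', w', \<gamma>') = (p, w0, \<beta> @ \<gamma>0)"
      "delta M q0 None Z = Some (p, \<beta>)"
    have "dpda_step M' (to_nat q0, w0, to_nat Z # map to_nat \<gamma>0) (to_nat p, w0, map to_nat \<beta> @ map to_nat \<gamma>0)"
      by (rule dpda_step.eps) (simp add: M'_def dl_enc h(3))
    thus ?thesis using h by simp
  next
    fix q0 a Z p \<beta> w0 \<gamma>0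
    assume h: "(q, w, \<gamma>) = (q0, a # w0, Z # \<gamma>0)" "(q', w', \<gamma>') = (p, w0, \<beta> @ \<gamma>0)"
      "delta M q0 (Some a) Z = Some (p, \<beta>)"
    have "dpda_step M' (to_nat q0, a # w0, to_nat Z # map to_nat \<gamma>0) (to_nat p, w0, map to_nat \<beta> @ map to_nat \<gamma>0)"
      by (rule dpda_step.read) (simp add: M'_def dl_enc h(3))
    thus ?thesis using h by simp
  qed
  have reachA: "(dpda_step M)\<^sup>*\<^sup>* c c' \<Longrightarrow>
      (dpda_step M')\<^sup>*\<^sup>* (to_nat (fst c), fst (snd c), map to_nat (snd (snd c)))
         (to_nat (fst c'), fst (snd c'), map to_nat (snd (snd c')))" for c c'
  proof (induction rule: rtranclp_induct)
    case (step y c')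
    obtain a b d where y: "y = (a, b, d)" by (cases y)
    obtain a' b' d' where c': "c' = (a', b', d')" by (cases c')
    show ?case using step y c' stepA[of a b d a' b' d'] by (auto intro: rtranclp.rtrancl_into_rtrancl)
  qed simp
  have reachB: "(dpda_step M')\<^sup>*\<^sup>* c d \<Longrightarrow> c = (to_nat q, w, map to_nat \<gamma>) \<Longrightarrow>
      \<exists>q' w' \<gamma>'. d = (to_nat q', w', map to_nat \<gamma>') \<and> (dpda_step M)\<^sup>*\<^sup>* (q, w, \<gamma>) (q', w', \<gamma>')"
    for c d q w \<gamma>
  proof (induction arbitrary: rule: rtranclp_induct)
    case base then show ?case by blast
  next
    case (step y d)
    then obtain q' w' \<gamma>' where y: "y = (to_nat q', w', map to_nat \<gamma>')" "(dpda_step M)\<^sup>*\<^sup>* (q, w, \<gamma>) (q', w', \<gamma>')"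
      by blast
    with stepB step(2) show ?case by (metis rtranclp.rtrancl_into_rtrancl)
  qed
  have "dpda_lang M' = dpda_lang M"
  proof safe
    fix w assume "w \<in> dpda_lang M'"
    then obtain q \<gamma> where "q \<in> finals M'" "(dpda_step M')\<^sup>*\<^sup>* (init M', w, [init_stack M']) (q, [], \<gamma>)"
      by (auto simp: dpda_lang_def)
    then obtain q0 where q0: "q0 \<in> finals M" "q = to_nat q0"
      and r: "(dpda_step M')\<^sup>*\<^sup>* (to_nat (init M), w, map to_nat [init_stack M]) (q, [], \<gamma>)"
      by (auto simp: M'_def)
    from reachB[OF r refl] obtain q' \<gamma>' where "q = to_nat q'"
      "(dpda_step M)\<^sup>*\<^sup>* (init M, w, [init_stack M]) (q', [], \<gamma>')" by auto
    with q0 show "w \<in> dpda_lang M" by (auto simp: dpda_lang_def)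
  next
    fix w assume "w \<in> dpda_lang M"
    then obtain q \<gamma> where "q \<in> finals M" "(dpda_step M)\<^sup>*\<^sup>* (init M, w, [init_stack M]) (q, [], \<gamma>)"
      by (auto simp: dpda_lang_def)
    with reachA[of "(init M, w, [init_stack M])" "(q, [], \<gamma>)"] show "w \<in> dpda_lang M'"
      by (auto simp: dpda_lang_def M'_def)
  qed
  with \<open>dpda_wf \<Sigma> M'\<close> show ?thesis unfolding dcfl_def by blast
qed



lemma maximal_nonempty: "maximal_prefix_code P \<Longrightarrow> P \<noteq> {}"
  unfolding maximal_prefix_code_def prefix_code_def by auto

lemma annot_Bot: "annot z u @ [Bot] = Bot # \<gamma> \<Longrightarrow> u = [] \<and> \<gamma> = []"
  by (cases u) auto

lemma annot_Cell: "annot z u @ [Bot] = Cell b I # \<gamma> \<Longrightarrow> \<exists>u'. u = b # u' \<and> \<gamma> = annot z u' @ [Bot]"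
  by (cases u) auto

lemma annot_hd: "annot z u @ [Bot] = Z # \<gamma> \<Longrightarrow> topinfo z Z = infoT z (conc u zeros)"
  using topinfo_hd[of z u] by simp

lemma annot_ne: "\<exists>Z \<gamma>. annot z u @ [Bot] = Z # \<gamma>"
  by (cases "annot z u @ [Bot]") auto

lemma foldr_comp_gen: "foldr (\<circ>) xs f = foldr (\<circ>) xs id \<circ> (f :: 'a \<Rightarrow> 'a)"
proof (induction xs)
  case (Cons y ys)
  have "foldr (\<circ>) (y # ys) f = y \<circ> foldr (\<circ>) ys f" by simp
  also have "\<dots> = y \<circ> (foldr (\<circ>) ys id \<circ> f)" using Cons.IH by (rule arg_cong)
  also have "\<dots> = foldr (\<circ>) (y # ys) id \<circ> f" by (simp add: comp_assoc)
  finally show ?case .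
qed simp

lemma eval_word_snoc: "eval_word (xs @ [a]) = eval_word xs \<circ> a"
  unfolding eval_word_def by (simp add: foldr_comp_gen[of xs a])

lemma annot_Bot_Syms_aux: "set (annot z u @ [Bot]) \<subseteq> insert Bot {Cell b I | b I. length I = Suc (length z)}"
  by (induction u) auto

locale mach =
  fixes G :: "(cantor \<Rightarrow> cantor) set" and z :: "bool list" and gs :: "(cantor \<Rightarrow> cantor) list"
    and PP :: "(cantor \<Rightarrow> cantor) \<Rightarrow> bool list set"
    and FF :: "(cantor \<Rightarrow> cantor) \<Rightarrow> bool list \<Rightarrow> bool list"
  assumes gs: "set gs = G"
    and gen: "\<And>g. g \<in> G \<Longrightarrow> finite (PP g) \<and> maximal_prefix_code (PP g) \<and>
                 (\<forall>p\<in>PP g. \<forall>t. g (conc p t) = conc (FF g p) t)"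
begin

definition idx :: "(cantor \<Rightarrow> cantor) \<Rightarrow> nat" where
  "idx a = (SOME i. i < length gs \<and> gs ! i = a)"

lemma idx: "a \<in> G \<Longrightarrow> idx a < length gs \<and> gs ! idx a = a"
  unfolding idx_def using gs by (metis (mono_tags, lifting) in_set_conv_nth someI_ex)

definition Pref :: "nat \<Rightarrow> bool list set" where
  "Pref i = {r. \<exists>p\<in>PP (gs ! i). prefix r p}"

definition Syms :: "sym set" where
  "Syms = insert Bot {Cell b I | b I. length I = Suc (length z)}"

definition Sts :: "st set" where
  "Sts = {Init, Ready True, Ready False} \<union> {Proc i r | i r. i < length gs \<and> r \<in> Pref i}"

definition dl :: "st \<Rightarrow> (cantor \<Rightarrow> cantor) option \<Rightarrow> sym \<Rightarrow> (st \<times> sym list) option" where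
  "dl q x Z = (case q of
      Init \<Rightarrow> (if x = None \<and> Z = Bot then Some (Ready False, annot z z @ [Bot]) else None)
    | Ready s \<Rightarrow> (case x of None \<Rightarrow> None
         | Some a \<Rightarrow> if a \<in> G \<and> Z \<in> Syms then Some (Proc (idx a) [], [Z]) else None)
    | Proc i r \<Rightarrow> (if x = None \<and> i < length gs \<and> r \<in> Pref i \<and> Z \<in> Syms then
         (if r \<in> PP (gs ! i) then
            Some (Ready (\<not> foldr (nxt z) (FF (gs ! i) r) (topinfo z Z) ! 0),
                  annotI z (FF (gs ! i) r) (topinfo z Z) @ [Z])
          else (case Z of
              Bot \<Rightarrow> if r @ [False] \<in> Pref i then Some (Proc i (r @ [False]), [Bot]) else None
            | Cell b I \<Rightarrow> if r @ [b] \<in> Pref i then Some (Proc i (r @ [b]), []) else None))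
       else None))"

definition M :: "(st, cantor \<Rightarrow> cantor, sym) dpda" where
  "M = \<lparr>states = Sts, init = Init, finals = {Ready True}, stack_syms = Syms, init_stack = Bot,
        delta = dl\<rparr>"

lemma gsi: "i < length gs \<Longrightarrow> gs ! i \<in> G"
  using gs by auto

lemma finite_Pref: "i < length gs \<Longrightarrow> finite (Pref i)"
proof -
  assume "i < length gs"
  hence "finite (PP (gs ! i))" using gen gsi by blast
  moreover have "Pref i = (\<Union>p\<in>PP (gs ! i). set (prefixes p))" by (auto simp: Pref_def)
  ultimately show ?thesis by simp
qed

lemma Nil_Pref: "i < length gs \<Longrightarrow> [] \<in> Pref i"
  using gen[OF gsi] maximal_nonempty by (fastforce simp: Pref_def)

lemma annot_Syms: "set (annot z u) \<subseteq> Syms"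
  by (induction u) (auto simp: Syms_def)

lemma annotI_Syms: "set (annotI z v I) \<subseteq> Syms"
proof (induction v)
  case (Cons b v)
  have "length (foldr (nxt z) (b # v) I) = Suc (length z)" by simp
  with Cons show ?case by (auto simp: Syms_def)
qed simp

lemma annot_Bot_Syms: "set (annot z u @ [Bot]) \<subseteq> Syms"
  using annot_Bot_Syms_aux[of z u] unfolding Syms_def .

lemma wf: "dpda_wf G M"
proof -
  have fG: "finite G" using gs by auto
  have fS: "finite Sts"
  proof -
    have "{Proc i r | i r. i < length gs \<and> r \<in> Pref i} = (\<Union>i<length gs. Proc i ` Pref i)" by auto
    thus ?thesis using finite_Pref by (simp add: Sts_def)
  qed
  have fY: "finite Syms"
  proof -
    have "{Cell b I | b I. length I = Suc (length z)} \<subseteq>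
        (\<lambda>(b, I). Cell b I) ` (UNIV \<times> {I. set I \<subseteq> UNIV \<and> length I = Suc (length z)})" by auto
    moreover have "finite ((UNIV :: bool set) \<times> {I. set I \<subseteq> (UNIV :: bool set) \<and> length I = Suc (length z)})"
      using finite_lists_length_eq[of "UNIV :: bool set"] by (intro finite_cartesian_product) (simp_all add: finite_UNIV)
    ultimately show ?thesis unfolding Syms_def by (meson finite_imageI finite_insert finite_subset)
  qed
  have D: "q \<in> Sts \<and> Z \<in> Syms \<and> p \<in> Sts \<and> set \<beta> \<subseteq> Syms \<and> (\<forall>a. x = Some a \<longrightarrow> a \<in> G)"
    if h: "dl q x Z = Some (p, \<beta>)" for q x Z p \<beta>
  proof (cases q)
    case Init
    with h have hh: "x = None" "Z = Bot" "p = Ready False" "\<beta> = annot z z @ [Bot]"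
      by (auto simp: dl_def split: if_splits)
    have "Bot \<in> Syms" by (simp add: Syms_def)
    thus ?thesis using hh Init annot_Syms[of z] by (auto simp: Sts_def)
  next
    case (Ready s)
    with h show ?thesis using idx Nil_Pref
      by (auto simp: dl_def Sts_def split: if_splits option.splits)
  next
    case (Proc i r)
    have B: "Bot \<in> Syms" by (simp add: Syms_def)
    from h Proc have g: "x = None" "i < length gs" "r \<in> Pref i" "Z \<in> Syms"
      by (auto simp: dl_def split: if_splits)
    have qS: "q \<in> Sts" using Proc g by (simp add: Sts_def)
    show ?thesis
    proof (cases "r \<in> PP (gs ! i)")
      case True
      with h Proc g have pb: "p = Ready (\<not> foldr (nxt z) (FF (gs ! i) r) (topinfo z Z) ! 0)"
        "\<beta> = annotI z (FF (gs ! i) r) (topinfo z Z) @ [Z]" by (simp_all add: dl_def)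
      have "set \<beta> \<subseteq> Syms" using pb(2) annotI_Syms[of "FF (gs ! i) r" "topinfo z Z"] g(4) by simp
      thus ?thesis using pb(1) qS g by (simp add: Sts_def)
    next
      case False
      show ?thesis
      proof (cases Z)
        case Bot
        with h Proc g False have pb: "p = Proc i (r @ [False])" "\<beta> = [Bot]" "r @ [False] \<in> Pref i"
          by (simp_all add: dl_def split: if_splits)
        thus ?thesis using qS g B by (simp add: Sts_def)
      next
        case (Cell b I)
        with h Proc g False have pb: "p = Proc i (r @ [b])" "\<beta> = []" "r @ [b] \<in> Pref i"
          by (simp_all add: dl_def split: if_splits)
        thus ?thesis using qS g by (simp add: Sts_def)
      qed
    qed
  qed
  have E: "dl q None Z \<noteq> None \<Longrightarrow> dl q (Some a) Z = None" for q Z a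
    by (cases q) (auto simp: dl_def)
  show ?thesis unfolding dpda_wf_def M_def dpda.simps
    using fG fS fY D E by (auto simp: Sts_def Syms_def)
qed

definition X :: "(cantor \<Rightarrow> cantor) list \<Rightarrow> cantor" where
  "X pre = eval_word (rev pre) (conc z zeros)"

lemma X_Nil: "X [] = conc z zeros"
  by (simp add: X_def eval_word_def)

lemma X_snoc: "X (pre @ [a]) = a (X pre)"
  by (simp add: X_def eval_word_def)

definition Inv :: "(cantor \<Rightarrow> cantor) list \<Rightarrow> st \<times> (cantor \<Rightarrow> cantor) list \<times> sym list \<Rightarrow> bool" where
  "Inv v c = (case c of (q, w, \<gamma>) \<Rightarrow> \<exists>pre. v = pre @ w \<and> set pre \<subseteq> G \<and>
     (case q of Init \<Rightarrow> pre = [] \<and> \<gamma> = [Bot]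
     | Ready s \<Rightarrow> (\<exists>u. \<gamma> = annot z u @ [Bot] \<and> conc u zeros = X pre \<and>
                   (s \<longleftrightarrow> pre \<noteq> [] \<and> X pre \<noteq> conc z zeros))
     | Proc i r \<Rightarrow> (\<exists>pre' u. pre = pre' @ [gs ! i] \<and> i < length gs \<and> \<gamma> = annot z u @ [Bot] \<and>
                   X pre' = conc r (conc u zeros))))"

lemma inv_step: "dpda_step M c c' \<Longrightarrow> Inv v c \<Longrightarrow> Inv v c'"
proof (induction rule: dpda_step.induct)
  case (eps q Z p \<beta> w \<gamma>)
  from eps.hyps have dq: "dl q None Z = Some (p, \<beta>)" by (simp add: M_def)
  from eps.prems obtain pre where pre: "v = pre @ w" "set pre \<subseteq> G" and
    cq: "case q of Init \<Rightarrow> pre = [] \<and> Z # \<gamma> = [Bot]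
     | Ready s \<Rightarrow> (\<exists>u. Z # \<gamma> = annot z u @ [Bot] \<and> conc u zeros = X pre \<and>
                   (s \<longleftrightarrow> pre \<noteq> [] \<and> X pre \<noteq> conc z zeros))
     | Proc i r \<Rightarrow> (\<exists>pre' u. pre = pre' @ [gs ! i] \<and> i < length gs \<and> Z # \<gamma> = annot z u @ [Bot] \<and>
                   X pre' = conc r (conc u zeros))"
    unfolding Inv_def by auto
  show ?case
  proof (cases q)
    case Init
    with dq cq have "p = Ready False" "\<beta> = annot z z @ [Bot]" "pre = []" "\<gamma> = []"
      by (auto simp: dl_def split: if_splits)
    thus ?thesis using pre unfolding Inv_def by (auto simp: X_Nil)
  next
    case (Ready s)
    with dq show ?thesis by (simp add: dl_def)
  next
    case (Proc i r)
    with cq obtain pre' u where h: "pre = pre' @ [gs ! i]" "i < length gs" "Z # \<gamma> = annot z u @ [Bot]"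
      "X pre' = conc r (conc u zeros)" by auto
    have gi: "gs ! i \<in> G" using gsi h(2) .
    have guard: "r \<in> Pref i" "Z \<in> Syms" using dq Proc by (auto simp: dl_def split: if_splits)
    show ?thesis
    proof (cases "r \<in> PP (gs ! i)")
      case True
      define vv where "vv = FF (gs ! i) r"
      have ti: "topinfo z Z = infoT z (conc u zeros)" using annot_hd h(3) by metis
      have pb: "p = Ready (\<not> foldr (nxt z) vv (topinfo z Z) ! 0)"
        "\<beta> = annotI z vv (topinfo z Z) @ [Z]"
        using dq Proc True guard h(2) by (auto simp: dl_def vv_def)
      have st: "\<beta> @ \<gamma> = annot z (vv @ u) @ [Bot]"
        using pb(2) ti h(3) annotI_annot[of z vv u] by (metis append.assoc append_Cons append_Nil)
      have Xp: "X pre = conc (vv @ u) zeros"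
        using h(1,4) gen[OF gi] True by (simp add: X_snoc vv_def conc_append)
      have fl: "(\<not> foldr (nxt z) vv (topinfo z Z) ! 0) \<longleftrightarrow> conc (vv @ u) zeros \<noteq> conc z zeros"
        by (simp add: ti foldr_nxt infoT_0 conc_append)
      show ?thesis unfolding Inv_def using pre pb(1) st Xp fl h(1)
        by (auto intro!: exI[of _ pre] exI[of _ "vv @ u"])
    next
      case False
      show ?thesis
      proof (cases Z)
        case Bot
        with dq Proc False guard h(2) have pb: "p = Proc i (r @ [False])" "\<beta> = [Bot]"
          by (auto simp: dl_def split: if_splits)
        from annot_Bot h(3) Bot have "u = []" "\<gamma> = []" by metis+
        hence "X pre' = conc (r @ [False]) (conc [] zeros)"
          using h(4) by (simp add: conc_append zeros_False)
        thus ?thesis unfolding Inv_def using pre pb h(1,2) \<open>\<gamma> = []\<close>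
          by (auto intro!: exI[of _ pre] exI[of _ "[] :: bool list"])
      next
        case (Cell b I)
        with dq Proc False guard h(2) have pb: "p = Proc i (r @ [b])" "\<beta> = []"
          by (auto simp: dl_def split: if_splits)
        from annot_Cell h(3) Cell obtain u' where u': "u = b # u'" "\<gamma> = annot z u' @ [Bot]" by metis
        hence "X pre' = conc (r @ [b]) (conc u' zeros)"
          using h(4) by (simp add: conc_append flip: conc_Cons)
        thus ?thesis unfolding Inv_def using pre pb h(1,2) u'
          by (auto intro!: exI[of _ pre] exI[of _ u'])
      qed
    qed
  qed
next
  case (read q a Z p \<beta> w \<gamma>)
  from read.hyps have dq: "dl q (Some a) Z = Some (p, \<beta>)" by (simp add: M_def)
  then obtain s where q: "q = Ready s" by (cases q) (auto simp: dl_def split: if_splits)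
  with dq have a: "a \<in> G" and pb: "p = Proc (idx a) []" "\<beta> = [Z]"
    by (auto simp: dl_def split: if_splits)
  from read.prems q obtain pre u where pre: "v = pre @ a # w" "set pre \<subseteq> G"
    "Z # \<gamma> = annot z u @ [Bot]" "conc u zeros = X pre"
    unfolding Inv_def by auto
  show ?case unfolding Inv_def using pre pb a idx[OF a]
    by (auto intro!: exI[of _ "pre @ [a]"] exI[of _ pre] exI[of _ u])
qed

lemma inv_reach: "(dpda_step M)\<^sup>*\<^sup>* c c' \<Longrightarrow> Inv v c \<Longrightarrow> Inv v c'"
  by (induction rule: rtranclp_induct) (auto intro: inv_step)

lemma sound: "w \<in> dpda_lang M \<Longrightarrow> w \<in> rev ` L_z G z"
proof -
  assume "w \<in> dpda_lang M"
  then obtain \<gamma> where r: "(dpda_step M)\<^sup>*\<^sup>* (Init, w, [Bot]) (Ready True, [], \<gamma>)"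
    by (auto simp: dpda_lang_def M_def)
  have "Inv w (Init, w, [Bot])" unfolding Inv_def by simp
  from inv_reach[OF r this] have "set w \<subseteq> G" "w \<noteq> []" "X w \<noteq> conc z zeros"
    unfolding Inv_def by auto
  hence "rev w \<in> L_z G z" by (auto simp: L_z_def X_def)
  thus ?thesis by (metis rev_rev_ident image_eqI)
qed

definition Kc :: "nat \<Rightarrow> nat" where
  "Kc i = Suc (\<Sum>p\<in>PP (gs ! i). length p)"

lemma proc_run:
  assumes i: "i < length gs"
  shows "r \<in> Pref i \<Longrightarrow> \<exists>u'. (dpda_step M)\<^sup>*\<^sup>* (Proc i r, w, annot z u @ [Bot])
      (Ready (conc u' zeros \<noteq> conc z zeros), w, annot z u' @ [Bot]) \<and>
      conc u' zeros = (gs ! i) (conc r (conc u zeros))"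
proof (induction "Kc i - length r" arbitrary: r u rule: less_induct)
  case less
  have gi: "gs ! i \<in> G" using gsi i .
  have fin: "finite (PP (gs ! i))" "maximal_prefix_code (PP (gs ! i))"
    and act: "\<And>p t. p \<in> PP (gs ! i) \<Longrightarrow> (gs ! i) (conc p t) = conc (FF (gs ! i) p) t"
    using gen[OF gi] by auto
  have lenK: "r \<in> Pref i \<Longrightarrow> length r < Kc i" for r
  proof -
    assume "r \<in> Pref i"
    then obtain p where p: "p \<in> PP (gs ! i)" "prefix r p" by (auto simp: Pref_def)
    have "length r \<le> length p" using p(2) by (rule prefix_length_le)
    also have "\<dots> \<le> (\<Sum>p\<in>PP (gs ! i). length p)" using fin(1) p(1) by (simp add: member_le_sum)
    finally show ?thesis by (simp add: Kc_def)
  qed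
  show ?case
  proof -
    obtain Z \<gamma> where Zg: "annot z u @ [Bot] = Z # \<gamma>" using annot_ne by blast
    have ZS: "Z \<in> Syms" proof -
    have "Z \<in> set (annot z u @ [Bot])" unfolding Zg by simp
    thus ?thesis using annot_Bot_Syms[of u] by blast
  qed
    show ?case
    proof (cases "r \<in> PP (gs ! i)")
      case True
      define vv where "vv = FF (gs ! i) r"
      have ti: "topinfo z Z = infoT z (conc u zeros)" using annot_hd Zg by metis
      have dq: "dl (Proc i r) None Z = Some (Ready (\<not> foldr (nxt z) vv (topinfo z Z) ! 0),
                  annotI z vv (topinfo z Z) @ [Z])"
        using True less.prems ZS i by (simp add: dl_def vv_def)
      have st: "(annotI z vv (topinfo z Z) @ [Z]) @ \<gamma> = annot z (vv @ u) @ [Bot]"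
        using ti Zg annotI_annot[of z vv u] by (metis append.assoc append_Cons append_Nil)
      have fl: "(\<not> foldr (nxt z) vv (topinfo z Z) ! 0) \<longleftrightarrow> conc (vv @ u) zeros \<noteq> conc z zeros"
        by (simp add: ti foldr_nxt infoT_0 conc_append)
      have "dpda_step M (Proc i r, w, Z # \<gamma>)
          (Ready (\<not> foldr (nxt z) vv (topinfo z Z) ! 0), w, (annotI z vv (topinfo z Z) @ [Z]) @ \<gamma>)"
        by (rule dpda_step.eps) (simp add: M_def dq)
      hence "dpda_step M (Proc i r, w, annot z u @ [Bot])
          (Ready (conc (vv @ u) zeros \<noteq> conc z zeros), w, annot z (vv @ u) @ [Bot])"
        unfolding Zg st fl .
      hence "(dpda_step M)\<^sup>*\<^sup>* (Proc i r, w, annot z u @ [Bot])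
          (Ready (conc (vv @ u) zeros \<noteq> conc z zeros), w, annot z (vv @ u) @ [Bot])"
        by (rule r_into_rtranclp)
      moreover have "conc (vv @ u) zeros = (gs ! i) (conc r (conc u zeros))"
        using act[OF True] by (simp add: vv_def conc_append)
      ultimately show ?thesis by blast
    next
      case False
      obtain p0 where p0: "p0 \<in> PP (gs ! i)" "prefix r p0" using less.prems by (auto simp: Pref_def)
      have ext: "r @ [b] \<in> Pref i" for b
        using pref_extend[OF fin p0 False] by (auto simp: Pref_def)
      have dec: "Kc i - length (r @ [b]) < Kc i - length r" for b
        using lenK[OF ext[of b]] by simp
      show ?thesis
      proof (cases u)
        case Nil
        with Zg have Z: "Z = Bot" "\<gamma> = []" by auto
        have dq: "dl (Proc i r) None Z = Some (Proc i (r @ [False]), [Bot])"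
          using False less.prems ZS i ext[of False] Z by (simp add: dl_def)
        have s1: "dpda_step M (Proc i r, w, Z # \<gamma>) (Proc i (r @ [False]), w, [Bot] @ \<gamma>)"
          by (rule dpda_step.eps) (simp add: M_def dq)
        from less.hyps[OF dec[of False] ext[of False], of "[]"] obtain u' where
          u': "(dpda_step M)\<^sup>*\<^sup>* (Proc i (r @ [False]), w, annot z [] @ [Bot])
            (Ready (conc u' zeros \<noteq> conc z zeros), w, annot z u' @ [Bot])"
            "conc u' zeros = (gs ! i) (conc (r @ [False]) (conc [] zeros))" by blast
        have "conc (r @ [False]) (conc [] zeros) = conc r (conc u zeros)"
          using Nil by (simp add: conc_append zeros_False)
        moreover have "dpda_step M (Proc i r, w, annot z u @ [Bot]) (Proc i (r @ [False]), w, annot z [] @ [Bot])"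
          using s1 Zg Z by simp
        note eqs = calculation this
        have "(dpda_step M)\<^sup>*\<^sup>* (Proc i r, w, annot z u @ [Bot])
            (Ready (conc u' zeros \<noteq> conc z zeros), w, annot z u' @ [Bot])"
          using eqs(2) u'(1) by (rule converse_rtranclp_into_rtranclp)
        thus ?thesis using u'(2) eqs(1) by (intro exI[of _ u'] conjI) simp_all
      next
        case (Cons b u1)
        with Zg have Z: "Z = Cell b (infoT z (conc (b # u1) zeros))" "\<gamma> = annot z u1 @ [Bot]" by auto
        have dq: "dl (Proc i r) None Z = Some (Proc i (r @ [b]), [])"
          using False less.prems ZS i ext[of b] Z by (simp add: dl_def)
        have s1: "dpda_step M (Proc i r, w, Z # \<gamma>) (Proc i (r @ [b]), w, [] @ \<gamma>)"
          by (rule dpda_step.eps) (simp add: M_def dq)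
        from less.hyps[OF dec[of b] ext[of b], of u1] obtain u' where
          u': "(dpda_step M)\<^sup>*\<^sup>* (Proc i (r @ [b]), w, annot z u1 @ [Bot])
            (Ready (conc u' zeros \<noteq> conc z zeros), w, annot z u' @ [Bot])"
            "conc u' zeros = (gs ! i) (conc (r @ [b]) (conc u1 zeros))" by blast
        have "conc (r @ [b]) (conc u1 zeros) = conc r (conc u zeros)"
          using Cons by (simp add: conc_append flip: conc_Cons)
        moreover have "dpda_step M (Proc i r, w, annot z u @ [Bot]) (Proc i (r @ [b]), w, annot z u1 @ [Bot])"
          using s1 Zg Z by simp
        note eqs = calculation this
        have "(dpda_step M)\<^sup>*\<^sup>* (Proc i r, w, annot z u @ [Bot])
            (Ready (conc u' zeros \<noteq> conc z zeros), w, annot z u' @ [Bot])"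
          using eqs(2) u'(1) by (rule converse_rtranclp_into_rtranclp)
        thus ?thesis using u'(2) eqs(1) by (intro exI[of _ u'] conjI) simp_all
      qed
    qed
  qed
qed

lemma read_run:
  assumes a: "a \<in> G"
  shows "\<exists>u'. (dpda_step M)\<^sup>*\<^sup>* (Ready s, a # w, annot z u @ [Bot])
      (Ready (conc u' zeros \<noteq> conc z zeros), w, annot z u' @ [Bot]) \<and> conc u' zeros = a (conc u zeros)"
proof -
  obtain Z \<gamma> where Zg: "annot z u @ [Bot] = Z # \<gamma>" using annot_ne by blast
  have ZS: "Z \<in> Syms" proof -
    have "Z \<in> set (annot z u @ [Bot])" unfolding Zg by simp
    thus ?thesis using annot_Bot_Syms[of u] by blast
  qed
  have "dl (Ready s) (Some a) Z = Some (Proc (idx a) [], [Z])" using a ZS by (simp add: dl_def)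
  hence s1: "dpda_step M (Ready s, a # w, Z # \<gamma>) (Proc (idx a) [], w, [Z] @ \<gamma>)"
    by (intro dpda_step.read) (simp add: M_def)
  have ia: "idx a < length gs" "gs ! idx a = a" using idx[OF a] by auto
  from proc_run[where w=w and u=u, OF ia(1) Nil_Pref[OF ia(1)]] ia(2) obtain u' where
    u': "(dpda_step M)\<^sup>*\<^sup>* (Proc (idx a) [], w, annot z u @ [Bot])
      (Ready (conc u' zeros \<noteq> conc z zeros), w, annot z u' @ [Bot])" "conc u' zeros = a (conc u zeros)"
    by auto
  moreover have "dpda_step M (Ready s, a # w, annot z u @ [Bot]) (Proc (idx a) [], w, annot z u @ [Bot])"
    using s1 Zg by simp
  hence "(dpda_step M)\<^sup>*\<^sup>* (Ready s, a # w, annot z u @ [Bot])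
      (Ready (conc u' zeros \<noteq> conc z zeros), w, annot z u' @ [Bot])"
    using u'(1) by (rule converse_rtranclp_into_rtranclp)
  thus ?thesis using u'(2) by blast
qed

lemma word_run:
  "set v \<subseteq> G \<Longrightarrow> \<exists>u'. (dpda_step M)\<^sup>*\<^sup>* (Ready s, v, annot z u @ [Bot])
      (Ready (if v = [] then s else conc u' zeros \<noteq> conc z zeros), [], annot z u' @ [Bot]) \<and>
      conc u' zeros = eval_word (rev v) (conc u zeros)"
proof (induction v arbitrary: s u)
  case Nil
  show ?case by (intro exI[of _ u]) (simp add: eval_word_def)
next
  case (Cons a v)
  have aG: "a \<in> G" and vG: "set v \<subseteq> G" using Cons.prems by simp_all
  from read_run[OF aG, where s=s and w=v and u=u] obtain u1 where
    r1: "(dpda_step M)\<^sup>*\<^sup>* (Ready s, a # v, annot z u @ [Bot])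
      (Ready (conc u1 zeros \<noteq> conc z zeros), v, annot z u1 @ [Bot])" and r1e: "conc u1 zeros = a (conc u zeros)"
    by blast
  from Cons.IH[OF vG, where s="conc u1 zeros \<noteq> conc z zeros" and u=u1] obtain u' where
    r2: "(dpda_step M)\<^sup>*\<^sup>* (Ready (conc u1 zeros \<noteq> conc z zeros), v, annot z u1 @ [Bot])
      (Ready (if v = [] then conc u1 zeros \<noteq> conc z zeros else conc u' zeros \<noteq> conc z zeros), [], annot z u' @ [Bot])"
    and r2e: "conc u' zeros = eval_word (rev v) (conc u1 zeros)" by blast
  have e: "eval_word (rev (a # v)) (conc u zeros) = eval_word (rev v) (conc u1 zeros)"
    using r1e by (simp add: eval_word_snoc)
  have fl: "(if v = [] then conc u1 zeros \<noteq> conc z zeros else conc u' zeros \<noteq> conc z zeros)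
      = (conc u' zeros \<noteq> conc z zeros)"
  proof (cases "v = []")
    case True
    hence "conc u' zeros = conc u1 zeros" using r2e by (simp add: eval_word_def)
    thus ?thesis using True by simp
  qed simp
  have "(dpda_step M)\<^sup>*\<^sup>* (Ready s, a # v, annot z u @ [Bot])
      (Ready (conc u' zeros \<noteq> conc z zeros), [], annot z u' @ [Bot])"
    using rtranclp_trans[OF r1 r2] unfolding fl .
  moreover have "a # v \<noteq> []" by simp
  ultimately show ?case using r2e e by (intro exI[of _ u'] conjI) simp_all
qed

lemma complete: "w \<in> rev ` L_z G z \<Longrightarrow> w \<in> dpda_lang M"
proof -
  assume "w \<in> rev ` L_z G z"
  then obtain w0 where w0: "w = rev w0" "set w0 \<subseteq> G" "w0 \<noteq> []"
    "eval_word w0 (conc z zeros) \<noteq> conc z zeros" by (auto simp: L_z_def)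
  have s1: "dpda_step M (Init, w, [Bot]) (Ready False, w, (annot z z @ [Bot]) @ [])"
    by (rule dpda_step.eps) (simp add: M_def dl_def)
  hence s1': "dpda_step M (Init, w, [Bot]) (Ready False, w, annot z z @ [Bot])" by simp
  have sw: "set w \<subseteq> G" using w0 by simp
  from word_run[OF sw, of False z] obtain u' where
    r: "(dpda_step M)\<^sup>*\<^sup>* (Ready False, w, annot z z @ [Bot])
      (Ready (if w = [] then False else conc u' zeros \<noteq> conc z zeros), [], annot z u' @ [Bot])"
    and e: "conc u' zeros = eval_word (rev w) (conc z zeros)" by blast
  have "(if w = [] then False else conc u' zeros \<noteq> conc z zeros) = True"
    using e w0 by simp
  with r have "(dpda_step M)\<^sup>*\<^sup>* (Ready False, w, annot z z @ [Bot]) (Ready True, [], annot z u' @ [Bot])"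
    by simp
  with s1' have "(dpda_step M)\<^sup>*\<^sup>* (Init, w, [Bot]) (Ready True, [], annot z u' @ [Bot])"
    by (rule converse_rtranclp_into_rtranclp)
  thus ?thesis by (auto simp: dpda_lang_def M_def)
qed

lemma lang: "dpda_lang M = rev ` L_z G z"
  using sound complete by blast

end


theorem lemma3p3:
  fixes \<Gamma> :: "(cantor \<Rightarrow> cantor) set" and z :: "bool list"
  assumes "finite \<Gamma>" and "monoid_generating_set \<Gamma>" and "z \<noteq> []"
  shows "L_z \<Gamma> z \<subseteq> cowp \<Gamma> \<and> dcfl \<Gamma> (rev ` L_z \<Gamma> z)"
proof
  show "L_z \<Gamma> z \<subseteq> cowp \<Gamma>"
    by (auto simp: L_z_def cowp_def)
  obtain gs where gs: "set gs = \<Gamma>" using finite_list assms(1) by blast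
  have "\<forall>g\<in>\<Gamma>. \<exists>P. \<exists>\<phi>. finite P \<and> maximal_prefix_code P \<and> (\<forall>p\<in>P. \<forall>t. g (conc p t) = conc (\<phi> p) t)"
    using assms(2) unfolding monoid_generating_set_def thompson_V_def by blast
  then obtain PP where "\<forall>g\<in>\<Gamma>. \<exists>\<phi>. finite (PP g) \<and> maximal_prefix_code (PP g) \<and>
      (\<forall>p\<in>PP g. \<forall>t. g (conc p t) = conc (\<phi> p) t)"
    by (auto dest: bchoice)
  note PPf = this
  hence "\<forall>g\<in>\<Gamma>. \<exists>\<phi>. \<forall>p\<in>PP g. \<forall>t. g (conc p t) = conc (\<phi> p) t" by blast
  then obtain FF where FF0: "\<forall>g\<in>\<Gamma>. \<forall>p\<in>PP g. \<forall>t. g (conc p t) = conc (FF g p) t"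
    by (erule bchoice[THEN exE])
  have FF: "\<forall>g\<in>\<Gamma>. finite (PP g) \<and> maximal_prefix_code (PP g) \<and>
      (\<forall>p\<in>PP g. \<forall>t. g (conc p t) = conc (FF g p) t)"
    using PPf FF0 by blast
  interpret m: mach \<Gamma> z gs PP FF
    by unfold_locales (use gs FF in auto)
  have "dcfl \<Gamma> (dpda_lang m.M)" by (rule dpda_to_nat[OF m.wf])
  thus "dcfl \<Gamma> (rev ` L_z \<Gamma> z)" by (simp add: m.lang)
qed


end
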